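(* Let $G=(V,E)$ be a connected graph and $d\ge 1$ an integer, and let $G^{(d)}$ be the graph obtained from $G$ by replacing each edge $xy\in E$ by a path of length $d$ connecting $x$ and $y$ (i.e., subdividing each edge by $d-1$ new vertices). Then $$\textrm{cn}(G) \le \textrm{cn}(G^{(d)}) \le \textrm{cn}(G)+1.$$
   Context: Game of cops and robber on a finite graph: $k$ cops are placed on vertices (possibly several on one vertex), then the robber is placed; players alternate starting with the cops; in a move each cop and, on his turn, the robber stays or moves to an adjacent vertex. The robber is captured when a cop occupies his vertex. $\textrm{cn}(G)$ is the least $k$ such that $k$ cops have a strategy guaranteeing capture. *)

theory Defs
  imports Main
begin

definition graph :: "'v set \<Rightarrow> ('v \<Rightarrow> 'v \<Rightarrow> bool) \<Rightarrow> bool" where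
  "graph V E \<longleftrightarrow> finite V \<and> (\<forall>x y. E x y \<longrightarrow> x \<in> V \<and> y \<in> V \<and> x \<noteq> y \<and> E y x)"

definition connected_graph :: "'v set \<Rightarrow> ('v \<Rightarrow> 'v \<Rightarrow> bool) \<Rightarrow> bool" where
  "connected_graph V E \<longleftrightarrow> V \<noteq> {} \<and> (\<forall>x\<in>V. \<forall>y\<in>V. E\<^sup>*\<^sup>* x y)"

definition cop_move :: "('v \<Rightarrow> 'v \<Rightarrow> bool) \<Rightarrow> 'v list \<Rightarrow> 'v list \<Rightarrow> bool" where
  "cop_move E cs cs' \<longleftrightarrow> list_all2 (\<lambda>a b. a = b \<or> E a b) cs cs'"

definition robber_move :: "('v \<Rightarrow> 'v \<Rightarrow> bool) \<Rightarrow> 'v \<Rightarrow> 'v \<Rightarrow> bool" where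
  "robber_move E r r' \<longleftrightarrow> r' = r \<or> E r r'"

text \<open>cops_win E cs r: in the position with cops at cs, robber at r and the cops
  to move, the cops have a strategy guaranteeing capture (attractor / backward induction).\<close>
inductive cops_win :: "('v \<Rightarrow> 'v \<Rightarrow> bool) \<Rightarrow> 'v list \<Rightarrow> 'v \<Rightarrow> bool" for E where
  caught: "r \<in> set cs \<Longrightarrow> cops_win E cs r"
| step: "cop_move E cs cs' \<Longrightarrow>
     (r \<in> set cs' \<or> (\<forall>r'. robber_move E r r' \<longrightarrow> cops_win E cs' r')) \<Longrightarrow> cops_win E cs r"

definition k_cops_win :: "'v set \<Rightarrow> ('v \<Rightarrow> 'v \<Rightarrow> bool) \<Rightarrow> nat \<Rightarrow> bool" where
  "k_cops_win V E k \<longleftrightarrow> (\<exists>cs. length cs = k \<and> set cs \<subseteq> V \<and> (\<forall>r\<in>V. cops_win E cs r))"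

definition cop_number :: "'v set \<Rightarrow> ('v \<Rightarrow> 'v \<Rightarrow> bool) \<Rightarrow> nat" where
  "cop_number V E = (LEAST k. k_cops_win V E k)"

text \<open>Subdivision G^(d): original vertices Inl x; the edge {x,y} with x < y gets
  internal vertices Inr (x,y,i), 0 < i < d, where Inr(x,y,i) is at distance i from x.\<close>
definition sub_pt :: "nat \<Rightarrow> 'a::linorder \<Rightarrow> 'a \<Rightarrow> nat \<Rightarrow> 'a + ('a \<times> 'a \<times> nat)" where
  "sub_pt d x y i = (if i = 0 then Inl x else if i = d then Inl y
                     else if x < y then Inr (x, y, i) else Inr (y, x, d - i))"

definition subdiv_V :: "'a::linorder set \<Rightarrow> ('a \<Rightarrow> 'a \<Rightarrow> bool) \<Rightarrow> nat \<Rightarrow> ('a + ('a \<times> 'a \<times> nat)) set" where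
  "subdiv_V V E d = Inl ` V \<union> {Inr (x, y, i) | x y i. E x y \<and> x < y \<and> 0 < i \<and> i < d}"

definition subdiv_E :: "('a::linorder \<Rightarrow> 'a \<Rightarrow> bool) \<Rightarrow> nat
     \<Rightarrow> ('a + ('a \<times> 'a \<times> nat)) \<Rightarrow> ('a + ('a \<times> 'a \<times> nat)) \<Rightarrow> bool" where
  "subdiv_E E d u v \<longleftrightarrow> (\<exists>x y i. E x y \<and> i < d \<and> {u, v} = {sub_pt d x y i, sub_pt d x y (Suc i)})"

end

theory Submission imports Defs begin

lemma sub_pt_0[simp]: "sub_pt d x y 0 = Inl x" by (simp add: sub_pt_def)
lemma sub_pt_d[simp]: "d \<noteq> 0 \<Longrightarrow> sub_pt d x y d = Inl y" by (simp add: sub_pt_def)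

lemma sub_pt_sym: "x \<noteq> y \<Longrightarrow> i \<le> d \<Longrightarrow> 0 < d \<Longrightarrow> sub_pt d x y i = sub_pt d y x (d - i)"
  by (auto simp: sub_pt_def)

lemma sub_pt_mid: "0 < i \<Longrightarrow> i < d \<Longrightarrow> sub_pt d x y i = (if x < y then Inr (x,y,i) else Inr (y,x,d-i))"
  by (auto simp: sub_pt_def)

lemma sub_pt_Inl: "a \<noteq> b \<Longrightarrow> s \<le> d \<Longrightarrow> 0 < d \<Longrightarrow>
   sub_pt d a b s = Inl z \<longleftrightarrow> (s = 0 \<and> z = a) \<or> (s = d \<and> z = b)"
  by (auto simp: sub_pt_def)

lemma sub_pt_eq_mid: "a \<noteq> b \<Longrightarrow> y \<noteq> x \<Longrightarrow> 0 < s \<Longrightarrow> s < d \<Longrightarrow> 0 < m \<Longrightarrow> m < d \<Longrightarrow>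
   sub_pt d a b s = sub_pt d y x m \<longleftrightarrow> (a = y \<and> b = x \<and> s = m) \<or> (a = x \<and> b = y \<and> s = d - m)"
  by (auto simp: sub_pt_def split: if_splits)


fun nbw :: "('b \<Rightarrow> 'b \<Rightarrow> bool) \<Rightarrow> 'b list \<Rightarrow> bool" where
  "nbw R [] = True"
| "nbw R [a] = True"
| "nbw R (a # b # r) = (R a b \<and> nbw R (b # r) \<and> (case r of [] \<Rightarrow> True | c # _ \<Rightarrow> c \<noteq> a))"

lemma nbw_tl: "nbw R t \<Longrightarrow> nbw R (tl t)"
  by (induction R t rule: nbw.induct) auto

lemma nbw_butlast: "nbw R t \<Longrightarrow> nbw R (butlast t)"
proof (induction R t rule: nbw.induct)
  case (3 R a b r)
  then show ?case by (cases r) (auto split: list.splits)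
qed auto

lemma nbw_snoc: "nbw R t \<Longrightarrow> t \<noteq> [] \<Longrightarrow> R (last t) x \<Longrightarrow>
   (2 \<le> length t \<Longrightarrow> x \<noteq> last (butlast t)) \<Longrightarrow> nbw R (t @ [x])"
proof (induction R t rule: nbw.induct)
  case (2 R a) then show ?case by simp
next
  case (3 R a b r)
  then show ?case by (cases r) (auto split: list.splits)
qed auto

lemma nbw_first: "nbw R t \<Longrightarrow> 2 \<le> length t \<Longrightarrow> R (hd t) (hd (tl t))"
  by (cases "(R, t)" rule: nbw.cases) auto

lemma nbw_last: "nbw R t \<Longrightarrow> 2 \<le> length t \<Longrightarrow> R (last (butlast t)) (last t)"
proof (induction R t rule: nbw.induct)
  case (3 R a b r)
  then show ?case by (cases r) auto
qed auto

definition pos :: "nat \<Rightarrow> 'a::linorder \<Rightarrow> 'a \<Rightarrow> nat \<Rightarrow> 'a + ('a \<times> 'a \<times> nat)" where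
  "pos d a b j = (if a = b then Inl a else sub_pt d a b j)"

definition frees :: "nat \<Rightarrow> 'a::linorder list \<Rightarrow> 'a list \<Rightarrow> nat \<Rightarrow> ('a + ('a \<times> 'a \<times> nat)) list" where
  "frees d c c' j = map2 (\<lambda>a b. pos d a b j) c c'"

lemma frees_0: "length c = length c' \<Longrightarrow> frees d c c' 0 = map Inl c"
  by (induction c c' rule: list_induct2) (auto simp: frees_def pos_def)

lemma frees_d: "length c = length c' \<Longrightarrow> 0 < d \<Longrightarrow> frees d c c' d = map Inl c'"
  by (induction c c' rule: list_induct2) (auto simp: frees_def pos_def)

lemma frees_cc: "frees d c c j = map Inl c"
  by (induction c) (auto simp: frees_def pos_def)

lemma hd_butl: "2 \<le> length xs \<Longrightarrow> hd (butlast xs) = hd xs"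
  by (cases xs) auto

lemma cop_move_refl: "cop_move R c c"
  by (simp add: cop_move_def list_all2_refl)

lemma cop_move_length: "cop_move R c c' \<Longrightarrow> length c = length c'"
  by (simp add: cop_move_def list_all2_lengthD)

definition star :: "('a::linorder \<Rightarrow> 'a \<Rightarrow> bool) \<Rightarrow> nat \<Rightarrow> 'a \<Rightarrow> 'a + ('a \<times> 'a \<times> nat) \<Rightarrow> bool" where
  "star E d c P \<longleftrightarrow> P = Inl c \<or> (\<exists>b s. E c b \<and> s < d \<and> P = sub_pt d c b s)"

definition Jr :: "('a::linorder \<Rightarrow> 'a \<Rightarrow> bool) \<Rightarrow> nat \<Rightarrow> nat \<Rightarrow> 'a \<Rightarrow> 'a + ('a \<times> 'a \<times> nat) \<Rightarrow> bool" where
  "Jr E d m c P \<longleftrightarrow> star E d c P \<or> (\<exists>a b s. E c a \<and> E a b \<and> s < m \<and> P = sub_pt d a b s)"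

locale sub =
  fixes V :: "'a::linorder set" and E :: "'a \<Rightarrow> 'a \<Rightarrow> bool" and d :: nat
  assumes G: "graph V E" and d1: "1 \<le> d"
begin

abbreviation "E' \<equiv> subdiv_E E d"
abbreviation "sp \<equiv> sub_pt d"

lemma Esym: "E x y \<Longrightarrow> E y x" using G by (auto simp: graph_def)
lemma Eneq: "E x y \<Longrightarrow> x \<noteq> y" using G by (auto simp: graph_def)
lemma EV: "E x y \<Longrightarrow> x \<in> V \<and> y \<in> V" using G by (auto simp: graph_def)

lemma E'_sym: "E' u w \<Longrightarrow> E' w u"
  unfolding subdiv_E_def by (metis insert_commute)

lemma E'_step: "E a b \<Longrightarrow> s < d \<Longrightarrow> E' (sp a b s) (sp a b (Suc s))"
  unfolding subdiv_E_def by blast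

lemma E'_stepb: "E a b \<Longrightarrow> s < d \<Longrightarrow> E' (sp a b (Suc s)) (sp a b s)"
  using E'_step E'_sym by blast

lemma E'_cases:
  assumes "E' u w"
  obtains x y i where "E x y" "i < d" "u = sp x y i" "w = sp x y (Suc i)"
proof -
  obtain x y i where xy: "E x y" "i < d" "{u, w} = {sp x y i, sp x y (Suc i)}"
    using assms unfolding subdiv_E_def by blast
  show ?thesis
  proof (cases "u = sp x y i \<and> w = sp x y (Suc i)")
    case True then show ?thesis using that xy by blast
  next
    case False
    then have uw: "u = sp x y (Suc i)" "w = sp x y i" using xy(3) by (auto simp: doubleton_eq_iff)
    have ne: "x \<noteq> y" using Eneq xy(1) by blast
    have "u = sp y x (d - Suc i)" using uw sub_pt_sym[OF ne, of "Suc i" d] xy(2) by simp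
    moreover have "w = sp y x (Suc (d - Suc i))" using uw sub_pt_sym[OF ne, of i d] xy(2)
      by (simp add: Suc_diff_Suc)
    ultimately show ?thesis using that[of y x "d - Suc i"] Esym[OF xy(1)] xy(2) by simp
  qed
qed

lemma sp_Inr: "0 < s \<Longrightarrow> s < d \<Longrightarrow> \<exists>p. sp a b s = Inr p"
  by (simp add: sub_pt_mid)

lemma nbr_mid:
  assumes ab: "E a b" and s: "0 < s" "s < d" and e: "E' (sp a b s) w"
  shows "w = sp a b (s - 1) \<or> w = sp a b (Suc s)"
proof -
  obtain x y i where xy: "E x y" "i < d" "sp a b s = sp x y i" "w = sp x y (Suc i)"
    using e by (rule E'_cases)
  have i0: "i \<noteq> 0" using xy(3) sp_Inr[OF s, of a b] by (cases i) auto
  have "(a = x \<and> b = y \<and> s = i) \<or> (a = y \<and> b = x \<and> s = d - i)"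
    using sub_pt_eq_mid[of a b x y s d i] xy Eneq[OF ab] Eneq[OF xy(1)] s i0 by auto
  then show ?thesis
  proof
    assume "a = x \<and> b = y \<and> s = i" then show ?thesis using xy by simp
  next
    assume h: "a = y \<and> b = x \<and> s = d - i"
    have "w = sp y x (d - Suc i)" using xy(4) sub_pt_sym[of x y "Suc i" d] Eneq[OF xy(1)] xy(2) by simp
    moreover have e: "d - Suc i = s - 1" using h by simp
    moreover have ha: "a = y" and hb: "b = x" using h by auto
    ultimately have "w = sp a b (s - 1)" by simp
    then show ?thesis by blast
  qed
qed

lemma nbr_Inl:
  assumes e: "E' (Inl a) w" shows "\<exists>z. E a z \<and> w = sp a z 1"
proof -
  obtain x y i where xy: "E x y" "i < d" "Inl a = sp x y i" "w = sp x y (Suc i)"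
    using e by (rule E'_cases)
  have "i = 0 \<and> a = x" using sub_pt_Inl[of x y i d a] xy Eneq[OF xy(1)] by auto
  then show ?thesis using xy by auto
qed



lemma frees_move: "cop_move E c c' \<Longrightarrow> j < d \<Longrightarrow> cop_move E' (frees d c c' j) (frees d c c' (Suc j))"
  unfolding cop_move_def frees_def
proof (induction c c' rule: list_all2_induct)
  case Nil then show ?case by simp
next
  case (Cons a c b c')
  have "pos d a b j = pos d a b (Suc j) \<or> E' (pos d a b j) (pos d a b (Suc j))"
    using Cons(1) E'_step[of a b j] Cons(4) by (auto simp: pos_def)
  then show ?case using Cons by simp
qed

lemma in_frees_d: "x \<in> set c' \<Longrightarrow> length c = length c' \<Longrightarrow> Inl x \<in> set (frees d c c' d)"
  using frees_d[of c c' d] d1 by auto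

lemma cop_move_V: "cop_move E c c' \<Longrightarrow> set c \<subseteq> V \<Longrightarrow> set c' \<subseteq> V"
  unfolding cop_move_def
  by (induction c c' rule: list_all2_induct) (auto dest: EV)

lemma star_Inl: "star E d c (Inl x) \<Longrightarrow> c = x"
proof -
  assume h: "star E d c (Inl x)"
  show ?thesis
  proof (cases "Inl x = (Inl c :: 'a + ('a \<times> 'a \<times> nat))")
    case True then show ?thesis by simp
  next
    case False
    then obtain b s where bs: "E c b" "s < d" "Inl x = sp c b s" using h unfolding star_def by blast
    then show ?thesis using sub_pt_Inl[of c b s d x] Eneq[OF bs(1)] by auto
  qed
qed

lemma J_near_Inl: "Jr E d k c (Inl x) \<Longrightarrow> k < d \<Longrightarrow> c = x \<or> E c x"
proof -
  assume J: "Jr E d k c (Inl x)" and k: "k < d"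
  show ?thesis
  proof (cases "star E d c (Inl x)")
    case True then show ?thesis using star_Inl by blast
  next
    case False
    then obtain a b s where abs: "E c a" "E a b" "s < k" "Inl x = sp a b s"
      using J unfolding Jr_def by blast
    have "s = 0 \<and> x = a" using sub_pt_Inl[of a b s d x] abs Eneq[OF abs(2)] k d1 by auto
    then show ?thesis using abs by auto
  qed
qed

lemma J_near:
  assumes J: "Jr E d k c (sp y x m)" and yx: "E y x" and m: "0 < m" "m \<le> d" and k: "k \<le> m" "k < d"
  shows "c = x \<or> E c x"
proof (cases "m = d")
  case True then show ?thesis using J_near_Inl J k d1 by simp
next
  case False
  then have md: "m < d" using m by simp
  have nyx: "y \<noteq> x" using Eneq yx by blast
  show ?thesis
  proof (cases "star E d c (sp y x m)")
    case True
    have "sp y x m \<noteq> Inl c" using sp_Inr[OF m(1) md, of y x] by auto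
    then obtain b s where bs: "E c b" "s < d" "sp y x m = sp c b s"
      using True unfolding star_def by blast
    have s0: "s \<noteq> 0" using bs(3) sp_Inr[OF m(1) md, of y x] by (cases s) auto
    have "(c = y \<and> b = x \<and> s = m) \<or> (c = x \<and> b = y \<and> s = d - m)"
      using sub_pt_eq_mid[of c b y x s d m] bs Eneq[OF bs(1)] nyx s0 m md by auto
    then show ?thesis using yx by auto
  next
    case False
    then obtain a b s where abs: "E c a" "E a b" "s < k" "sp y x m = sp a b s"
      using J unfolding Jr_def by blast
    have s0: "s \<noteq> 0" using abs(4) sp_Inr[OF m(1) md, of y x] by (cases s) auto
    have "(a = y \<and> b = x \<and> s = m) \<or> (a = x \<and> b = y \<and> s = d - m)"
      using sub_pt_eq_mid[of a b y x s d m] abs Eneq[OF abs(2)] nyx s0 m md k by auto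
    then show ?thesis using abs k by auto
  qed
qed

lemma J_step:
  assumes J: "Jr E d m c P" and md: "m < d" and mv: "robber_move E' P P'"
  shows "Jr E d (Suc m) c P'"
proof (cases "P' = P")
  case True then show ?thesis using J less_SucI unfolding Jr_def by blast
next
  case False
  then have e: "E' P P'" using mv by (simp add: robber_move_def)
  have inl: "Jr E d (Suc m) c P'" if Pa: "P = Inl a" and ha: "a = c \<or> (E c a \<and> 0 < m)" for a
  proof -
    obtain z where z: "E a z" "P' = sp a z 1" using nbr_Inl[of a P'] e Pa by auto
    show ?thesis
    proof (cases "a = c")
      case True
      show ?thesis
      proof (cases "1 < d")
        case True then show ?thesis using z \<open>a = c\<close> unfolding Jr_def star_def by blast
      next
        case False
        then have "d = 1" using d1 by simp
        then have "P' = sp z c 0" using z \<open>a = c\<close> by simp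
        then show ?thesis using z Esym[OF z(1)] \<open>a = c\<close> unfolding Jr_def by blast
      qed
    next
      case False
      then have "E c a" "0 < m" using ha by auto
      then show ?thesis using z unfolding Jr_def by (metis Suc_lessI One_nat_def less_Suc_eq_0_disj)
    qed
  qed
  have mid: "Jr E d (Suc m) c P'" if "P = sp a b s" "E a b" "0 < s" "s < d"
     "(a = c) \<or> (E c a \<and> s < m)" for a b s
  proof -
    have "P' = sp a b (s - 1) \<or> P' = sp a b (Suc s)" using nbr_mid that e by blast
    then show ?thesis
    proof
      assume h: "P' = sp a b (s - 1)"
      show ?thesis using that(5)
      proof
        assume "a = c"
        moreover have "s - 1 < d" using that by simp
        ultimately show ?thesis using h that unfolding Jr_def star_def by blast
      next
        assume ca: "E c a \<and> s < m"
        have "s - 1 < Suc m" using ca by linarith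
        then show ?thesis using h that ca unfolding Jr_def by blast
      qed
    next
      assume h: "P' = sp a b (Suc s)"
      show ?thesis using that(5)
      proof
        assume ac: "a = c"
        show ?thesis
        proof (cases "Suc s < d")
          case True then show ?thesis using h that ac unfolding Jr_def star_def by auto
        next
          case False
          then have "Suc s = d" using that by simp
          then have "P' = sp b a 0" using h by simp
          then show ?thesis using that ac Esym[OF that(2)] unfolding Jr_def by blast
        qed
      next
        assume ca: "E c a \<and> s < m"
        have "Suc s < Suc m" using ca by simp
        then show ?thesis using h that ca unfolding Jr_def by blast
      qed
    qed
  qed
  show ?thesis
  proof (cases "star E d c P")
    case True
    then consider "P = Inl c" | b s where "E c b" "s < d" "P = sp c b s" unfolding star_def by blast
    then show ?thesis
    proof cases
      case 1 then show ?thesis using inl by blast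
    next
      case 2
      show ?thesis
      proof (cases "s = 0")
        case True then show ?thesis using 2 inl by simp
      next
        case False then show ?thesis using 2 mid by blast
      qed
    qed
  next
    case False
    then obtain a b s where abs: "E c a" "E a b" "s < m" "P = sp a b s" using J unfolding Jr_def by blast
    show ?thesis
    proof (cases "s = 0")
      case True then show ?thesis using abs inl by simp
    next
      case False then show ?thesis using abs mid md by simp
    qed
  qed
qed

lemma J_d: "Jr E d d c P \<Longrightarrow> \<exists>c'. (c' = c \<or> E c c') \<and> star E d c' P"
  unfolding Jr_def star_def by blast

lemma star_J: "star E d c P \<Longrightarrow> Jr E d m c P"
  unfolding Jr_def by blast

lemma path_lift: "E a b \<Longrightarrow> s \<le> d \<Longrightarrow> E'\<^sup>*\<^sup>* (Inl a) (sp a b s)"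
proof (induction s)
  case 0 then show ?case by simp
next
  case (Suc s)
  then show ?case using E'_step[of a b s] by (simp add: rtranclp.rtrancl_into_rtrancl)
qed

lemma lift_rt: "E\<^sup>*\<^sup>* x y \<Longrightarrow> E'\<^sup>*\<^sup>* (Inl x) (Inl y)"
proof (induction rule: rtranclp_induct)
  case base then show ?case by simp
next
  case (step y z)
  then show ?case using path_lift[of y z d] d1 by simp
qed

lemma nbw_reach: "E'\<^sup>*\<^sup>* u v \<Longrightarrow> \<exists>t. nbw E' t \<and> t \<noteq> [] \<and> hd t = u \<and> last t = v"
proof (induction rule: rtranclp_induct)
  case base then show ?case by (intro exI[of _ "[u]"]) simp
next
  case (step y z)
  then obtain t where t: "nbw E' t" "t \<noteq> []" "hd t = u" "last t = y" by blast
  show ?case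
  proof (cases "2 \<le> length t \<and> z = last (butlast t)")
    case True
    have bn: "butlast t \<noteq> []" using True by (cases t) auto
    show ?thesis
    proof (intro exI[of _ "butlast t"] conjI)
      show "nbw E' (butlast t)" using nbw_butlast[OF t(1)] .
      show "butlast t \<noteq> []" using bn .
      show "hd (butlast t) = u" using hd_butl[of t] True t(3) by simp
      show "last (butlast t) = z" using True by simp
    qed
  next
    case False
    then show ?thesis using t step(2) nbw_snoc[OF t(1) t(2), of z]
      by (intro exI[of _ "t @ [z]"]) auto
  qed
qed

lemma tail_cases:
  assumes t: "nbw E' t" "3 \<le> length t" and mv: "robber_move E' (last t) R'"
  shows "(\<exists>t'. nbw E' t' \<and> t' \<noteq> [] \<and> hd t' = hd (tl t) \<and> last t' = R' \<and> length t' < length t) \<or>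
    (E' (last t) R' \<and> R' \<noteq> last (butlast t) \<and> R' \<noteq> last t \<and> nbw E' (tl t @ [R']))"
proof -
  obtain a b r where abr: "t = a # b # r" "r \<noteq> []" using t(2)
  proof -
    obtain a b r where "t = a # b # r" using t(2) by (cases t; cases "tl t"; auto)
    moreover have "r \<noteq> []" using t(2) calculation by auto
    ultimately show ?thesis using that by blast
  qed
  have ntl: "nbw E' (b # r)" using nbw_tl[OF t(1)] abr by simp
  have lt: "last t = last r" "last (butlast t) = last (b # butlast r)" "hd (tl t) = b"
    using abr by auto
  show ?thesis
  proof (cases "R' = last t")
    case True
    then show ?thesis using ntl abr lt
      by (intro disjI1 exI[of _ "b # r"]) auto
  next
    case False
    then have e: "E' (last t) R'" using mv by (simp add: robber_move_def)
    show ?thesis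
    proof (cases "R' = last (butlast t)")
      case True
      have "nbw E' (butlast (b # r))" using nbw_butlast[OF ntl] .
      then have "nbw E' (b # butlast r)" using abr by simp
      then show ?thesis using True abr lt
        by (intro disjI1 exI[of _ "b # butlast r"]) auto
    next
      case False
      have "nbw E' ((b # r) @ [R'])"
        by (rule nbw_snoc[OF ntl]) (use e False abr lt in auto)
      then show ?thesis using e False \<open>R' \<noteq> last t\<close> abr by simp
    qed
  qed
qed


lemma chase:
  assumes t: "nbw E' t" "2 \<le> length t" and F: "cop_move E' F F'"
  and shrink: "\<And>t'. nbw E' t' \<Longrightarrow> t' \<noteq> [] \<Longrightarrow> length t' < length t \<Longrightarrow> hd t' = hd (tl t) \<Longrightarrow>
      cops_win E' (hd t' # F') (last t')"
  and fwd: "\<And>R'. E' (last t) R' \<Longrightarrow> R' \<noteq> last (butlast t) \<Longrightarrow> R' \<noteq> last t \<Longrightarrow> last t \<notin> set F' \<Longrightarrow>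
      3 \<le> length t \<Longrightarrow> nbw E' (tl t @ [R']) \<Longrightarrow> cops_win E' (hd (tl t) # F') R'"
  shows "cops_win E' (hd t # F) (last t)"
proof -
  have mv: "cop_move E' (hd t # F) (hd (tl t) # F')"
    using nbw_first[OF t] F by (simp add: cop_move_def)
  show ?thesis
  proof (rule cops_win.step[OF mv])
    show "last t \<in> set (hd (tl t) # F') \<or> (\<forall>r'. robber_move E' (last t) r' \<longrightarrow> cops_win E' (hd (tl t) # F') r')"
    proof (cases "length t = 2 \<or> last t \<in> set F'")
      case True
      then show ?thesis
      proof
        assume "length t = 2"
        then have "hd (tl t) = last t" by (cases t; cases "tl t"; auto)
        then show ?thesis by simp
      qed simp
    next
      case False
      then have t3: "3 \<le> length t" and nF: "last t \<notin> set F'" using t(2) by auto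
      show ?thesis
      proof (intro disjI2 allI impI)
        fix R' assume rm: "robber_move E' (last t) R'"
        from tail_cases[OF t(1) t3 rm] show "cops_win E' (hd (tl t) # F') R'"
        proof
          assume "\<exists>t'. nbw E' t' \<and> t' \<noteq> [] \<and> hd t' = hd (tl t) \<and> last t' = R' \<and> length t' < length t"
          then obtain t' where "nbw E' t'" "t' \<noteq> []" "hd t' = hd (tl t)" "last t' = R'" "length t' < length t"
            by blast
          then show ?thesis using shrink[of t'] by simp
        next
          assume "E' (last t) R' \<and> R' \<noteq> last (butlast t) \<and> R' \<noteq> last t \<and> nbw E' (tl t @ [R'])"
          then show ?thesis using fwd nF t3 by blast
        qed
      qed
    qed
  qed
qed

lemma snoc_facts:
  assumes "2 \<le> length t"
  shows "hd (tl t @ [R']) = hd (tl t)" "last (butlast (tl t @ [R'])) = last t"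
    "last (tl t @ [R']) = R'" "length (tl t @ [R']) = length t" "2 \<le> length (tl t @ [R'])"
  using assms by (cases t; cases "tl t"; auto)+


lemma capture_G:
  assumes l: "list_all2 Q c C" and R: "R \<in> set C" and near: "\<And>a. Q a R \<Longrightarrow> a = x \<or> E a x"
  shows "cops_win E c x"
proof -
  obtain i where i: "i < length C" "C ! i = R" using R by (meson in_set_conv_nth)
  have lc: "length c = length C" using l by (simp add: list_all2_lengthD)
  have "Q (c ! i) (C ! i)" using list_all2_nthD2[OF l i(1)] .
  then have "Q (c ! i) R" using i by simp
  then have ci: "c ! i = x \<or> E (c ! i) x" using near by blast
  have mv: "cop_move E c (c[i := x])"
    unfolding cop_move_def list_all2_conv_all_nth
  proof (intro conjI allI impI)
    fix j assume "j < length c"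
    show "c ! j = c[i := x] ! j \<or> E (c ! j) (c[i := x] ! j)"
      using ci i lc by (cases "j = i") (auto simp: nth_list_update)
  qed simp
  have "x \<in> set (c[i := x])" using i lc by (simp add: set_update_memI)
  then show ?thesis using cops_win.step[OF mv] by blast
qed

lemma J_list_step:
  assumes l: "list_all2 (Jr E d m) c C" and mv: "cop_move E' C C'" and md: "m < d"
  shows "list_all2 (Jr E d (Suc m)) c C'"
proof -
  have lc: "length c = length C" "length C = length C'"
    using l mv by (auto simp: list_all2_lengthD cop_move_def)
  show ?thesis unfolding list_all2_conv_all_nth
  proof (intro conjI allI impI)
    show "length c = length C'" using lc by simp
    fix i assume "i < length c"
    then have "Jr E d m (c ! i) (C ! i)" "C' ! i = C ! i \<or> E' (C ! i) (C' ! i)"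
      using l mv lc by (auto simp: list_all2_conv_all_nth cop_move_def)
    then show "Jr E d (Suc m) (c ! i) (C' ! i)"
      using J_step md by (auto simp: robber_move_def)
  qed
qed

lemma J_list_d:
  "list_all2 (Jr E d d) c C \<Longrightarrow> \<exists>c'. cop_move E c c' \<and> list_all2 (star E d) c' C"
proof (induction c C rule: list_all2_induct)
  case Nil then show ?case by (auto simp: cop_move_def)
next
  case (Cons a c P C)
  obtain c' where c': "cop_move E c c'" "list_all2 (star E d) c' C" using Cons by blast
  obtain a' where a': "a' = a \<or> E a a'" "star E d a' P" using J_d[OF Cons(1)] by blast
  show ?case using c' a' by (intro exI[of _ "a' # c'"]) (auto simp: cop_move_def)
qed

lemma star_list_J: "list_all2 (star E d) c C \<Longrightarrow> list_all2 (Jr E d m) c C"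
  by (induction c C rule: list_all2_induct) (auto simp: star_J)

lemma lb_sim:
  "cops_win E' C R \<Longrightarrow> (\<forall>c x m. 1 \<le> m \<and> m \<le> d \<and> ((\<exists>y. E y x \<and> R = sp y x m) \<or> R = Inl x) \<and>
      list_all2 (Jr E d (m - 1)) c C \<longrightarrow> cops_win E c x)"
proof (induction rule: cops_win.induct)
  case (caught R C)
  show ?case
  proof (intro allI impI)
    fix c x m assume h: "1 \<le> m \<and> m \<le> d \<and> ((\<exists>y. E y x \<and> R = sp y x m) \<or> R = Inl x) \<and>
      list_all2 (Jr E d (m - 1)) c C"
    show "cops_win E c x"
    proof (rule capture_G[of "Jr E d (m - 1)" c C R])
      fix a assume J: "Jr E d (m - 1) a R"
      show "a = x \<or> E a x"
        using h J J_near[of "m - 1" a _ x m] J_near_Inl[of "m - 1" a x] by auto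
    qed (use h caught in auto)
  qed
next
  case (step C C' R)
  show ?case
  proof (intro allI impI)
    fix c x m assume h: "1 \<le> m \<and> m \<le> d \<and> ((\<exists>y. E y x \<and> R = sp y x m) \<or> R = Inl x) \<and>
      list_all2 (Jr E d (m - 1)) c C"
    have m1: "Suc (m - 1) = m" "m - 1 < d" using h d1 by auto
    have Jm: "list_all2 (Jr E d m) c C'"
      using J_list_step[of "m - 1" c C C'] h step(1) m1 by simp
    show "cops_win E c x"
    proof (cases "m < d")
      case md: True
      show ?thesis
      proof (cases "R \<in> set C'")
        case True
        show ?thesis
        proof (rule capture_G[OF Jm True])
          fix a assume J: "Jr E d m a R"
          show "a = x \<or> E a x"
            using h J md J_near[of m a _ x m] J_near_Inl[of m a x] by auto
        qed
      next
        case False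
        then have all: "\<forall>R'. robber_move E' R R' \<longrightarrow> (\<forall>c x m. 1 \<le> m \<and> m \<le> d \<and>
          ((\<exists>y. E y x \<and> R' = sp y x m) \<or> R' = Inl x) \<and> list_all2 (Jr E d (m - 1)) c C' \<longrightarrow> cops_win E c x)"
          using step(2) by blast
        from h consider y where "E y x" "R = sp y x m" | "R = Inl x" by blast
        then show ?thesis
        proof cases
          case 1
          have rm: "robber_move E' R (sp y x (Suc m))" using E'_step[OF 1(1) md] 1 by (simp add: robber_move_def)
          have pre: "1 \<le> Suc m \<and> Suc m \<le> d \<and> ((\<exists>y'. E y' x \<and> sp y x (Suc m) = sp y' x (Suc m)) \<or> sp y x (Suc m) = Inl x)
             \<and> list_all2 (Jr E d (Suc m - 1)) c C'" using 1 md Jm by auto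
          show ?thesis using all rm pre by blast
        next
          case 2
          have rm: "robber_move E' R R" by (simp add: robber_move_def)
          have pre: "1 \<le> Suc m \<and> Suc m \<le> d \<and> ((\<exists>y'. E y' x \<and> R = sp y' x (Suc m)) \<or> R = Inl x)
             \<and> list_all2 (Jr E d (Suc m - 1)) c C'" using 2 md Jm by auto
          show ?thesis using all rm pre by blast
        qed
      qed
    next
      case False
      then have md: "m = d" using h by simp
      then have Rx: "R = Inl x" using h d1 by auto
      obtain c' where c': "cop_move E c c'" "list_all2 (star E d) c' C'"
        using J_list_d Jm md by blast
      show ?thesis
      proof (rule cops_win.step[OF c'(1)])
        show "x \<in> set c' \<or> (\<forall>r'. robber_move E x r' \<longrightarrow> cops_win E c' r')"
        proof (cases "R \<in> set C'")
          case True
          obtain i where i: "i < length C'" "C' ! i = R" using True by (meson in_set_conv_nth)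
          have "star E d (c' ! i) (C' ! i)" using list_all2_nthD2[OF c'(2) i(1)] .
          then have "star E d (c' ! i) (Inl x)" using i Rx by simp
          then have "c' ! i = x" using star_Inl by blast
          then show ?thesis using i c'(2) by (metis list_all2_lengthD nth_mem disjI1)
        next
          case False
          then have all: "\<forall>R'. robber_move E' R R' \<longrightarrow> (\<forall>c x m. 1 \<le> m \<and> m \<le> d \<and>
            ((\<exists>y. E y x \<and> R' = sp y x m) \<or> R' = Inl x) \<and> list_all2 (Jr E d (m - 1)) c C' \<longrightarrow> cops_win E c x)"
            using step(2) by blast
          have J0: "list_all2 (Jr E d 0) c' C'" using star_list_J[OF c'(2)] .
          show ?thesis
          proof (intro disjI2 allI impI)
            fix x' assume "robber_move E x x'"
            then consider "x' = x" | "E x x'" by (auto simp: robber_move_def)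
            then show "cops_win E c' x'"
            proof cases
              case 1
              have rm: "robber_move E' R R" by (simp add: robber_move_def)
              have pre: "1 \<le> (1::nat) \<and> 1 \<le> d \<and> ((\<exists>y'. E y' x' \<and> R = sp y' x' 1) \<or> R = Inl x')
                 \<and> list_all2 (Jr E d (1 - 1)) c' C'" using 1 Rx J0 d1 by auto
              show ?thesis using all rm pre by blast
            next
              case 2
              have rm: "robber_move E' R (sp x x' 1)" using E'_step[OF 2, of 0] Rx d1 by (simp add: robber_move_def)
              have pre: "1 \<le> (1::nat) \<and> 1 \<le> d \<and> ((\<exists>y'. E y' x' \<and> sp x x' 1 = sp y' x' 1) \<or> sp x x' 1 = Inl x')
                 \<and> list_all2 (Jr E d (1 - 1)) c' C'" using 2 J0 d1 by auto
              show ?thesis using all rm pre by blast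
            qed
          qed
        qed
      qed
    qed
  qed
qed

end

locale ub = sub +
  fixes k :: nat
  assumes Gwin: "length c = k \<Longrightarrow> set c \<subseteq> V \<Longrightarrow> x \<in> V \<Longrightarrow> cops_win E c x"
begin

definition Pst :: "nat \<Rightarrow> bool" where
  "Pst g \<longleftrightarrow> (\<forall>t c c' j. nbw E' t \<and> length t = Suc g \<and> cop_move E c c' \<and> set c \<subseteq> V \<and>
      length c = k \<and> j \<le> d \<longrightarrow> cops_win E' (hd t # frees d c c' j) (last t))"

definition Aconc :: "nat \<Rightarrow> 'a list \<Rightarrow> 'a \<Rightarrow> bool" where
  "Aconc g c x \<longleftrightarrow> (\<forall>y t. E y x \<and> nbw E' t \<and> length t = Suc g \<and> 2 \<le> length t \<and>
      last (butlast t) = Inl y \<and> last t = sp y x 1 \<and> set c \<subseteq> V \<and> length c = k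
      \<longrightarrow> cops_win E' (hd t # map Inl c) (last t))"

lemma shrinkIH:
  assumes IH: "\<forall>g'<g. Pst g'" and "nbw E' t'" "t' \<noteq> []" "length t' < Suc g"
    "cop_move E c c'" "set c \<subseteq> V" "length c = k" "j \<le> d"
  shows "cops_win E' (hd t' # frees d c c' j) (last t')"
proof -
  have "length t' = Suc (length t' - 1)" using assms(3) by (cases t') auto
  moreover have "length t' - 1 < g" using assms(3) assms(4) by (cases t') auto
  ultimately show ?thesis using IH assms unfolding Pst_def by metis
qed

lemma block:
  assumes IH: "\<forall>g'<g. Pst g'" and cm: "cop_move E c c'" and cV: "set c \<subseteq> V" and ck: "length c = k"
    and nxt: "x \<in> set c' \<or> (\<forall>z. E x z \<longrightarrow> Aconc g c' z)"
  shows "j < d \<Longrightarrow> E y x \<Longrightarrow> nbw E' t \<Longrightarrow> length t = Suc g \<Longrightarrow> 2 \<le> length t \<Longrightarrow>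
    last (butlast t) = sp y x j \<Longrightarrow> last t = sp y x (Suc j) \<Longrightarrow>
    cops_win E' (hd t # frees d c c' j) (last t)"
proof (induction "d - j" arbitrary: j t rule: less_induct)
  case less
  have lc: "length c = length c'" using cop_move_length[OF cm] .
  have c'V: "set c' \<subseteq> V" using cop_move_V[OF cm cV] .
  show ?case
  proof (rule chase[OF less.prems(3) less.prems(5) frees_move[OF cm less.prems(1)]])
    fix t' assume "nbw E' t'" "t' \<noteq> []" "length t' < length t"
    then show "cops_win E' (hd t' # frees d c c' (Suc j)) (last t')"
      using shrinkIH[OF IH, of t' c c' "Suc j"] less.prems cm cV ck by simp
  next
    fix R' assume e: "E' (last t) R'" and nb: "R' \<noteq> last (butlast t)" and nR: "R' \<noteq> last t"
      and nF: "last t \<notin> set (frees d c c' (Suc j))" and t3: "3 \<le> length t" and nw: "nbw E' (tl t @ [R'])"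
    note sf = snoc_facts[OF less.prems(5), of R']
    show "cops_win E' (hd (tl t) # frees d c c' (Suc j)) R'"
    proof (cases "Suc j < d")
      case True
      have "R' = sp y x (Suc j - 1) \<or> R' = sp y x (Suc (Suc j))"
        using nbr_mid[OF less.prems(2), of "Suc j" R'] True e less.prems by simp
      then have R': "R' = sp y x (Suc (Suc j))" using nb less.prems by auto
      have "cops_win E' (hd (tl t @ [R']) # frees d c c' (Suc j)) (last (tl t @ [R']))"
        by (rule less.hyps[of "Suc j"]) (use True less.prems nw sf R' in auto)
      then show ?thesis using sf by simp
    next
      case False
      then have jd: "Suc j = d" using less.prems by simp
      then have lt: "last t = Inl x" using less.prems d1 by simp
      have fd: "frees d c c' (Suc j) = map Inl c'" using frees_d[OF lc] jd d1 by simp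
      then have "x \<notin> set c'" using nF lt by auto
      then have A: "\<forall>z. E x z \<longrightarrow> Aconc g c' z" using nxt by blast
      obtain z where z: "E x z" "R' = sp x z 1" using nbr_Inl[of x R'] e lt by auto
      have Az: "Aconc g c' z" using A z(1) by blast
      have pre: "E x z \<and> nbw E' (tl t @ [R']) \<and> length (tl t @ [R']) = Suc g \<and> 2 \<le> length (tl t @ [R']) \<and>
        last (butlast (tl t @ [R'])) = Inl x \<and> last (tl t @ [R']) = sp x z 1 \<and> set c' \<subseteq> V \<and> length c' = k"
        using z nw sf lt less.prems c'V lc ck by auto
      have "cops_win E' (hd (tl t @ [R']) # map Inl c') (last (tl t @ [R']))"
        using Az pre unfolding Aconc_def by blast
      then show ?thesis using sf fd by simp
    qed
  qed
qed

lemma Alem: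
  assumes IH: "\<forall>g'<g. Pst g'"
  shows "cops_win E c x \<Longrightarrow> Aconc g c x"
proof (induction rule: cops_win.induct)
  case (caught r cs)
  show ?case unfolding Aconc_def
  proof (intro allI impI)
    fix y t assume h: "E y r \<and> nbw E' t \<and> length t = Suc g \<and> 2 \<le> length t \<and> last (butlast t) = Inl y \<and>
      last t = sp y r 1 \<and> set cs \<subseteq> V \<and> length cs = k"
    have "cops_win E' (hd t # frees d cs cs 0) (last t)"
      using block[OF IH cop_move_refl, of cs r 0 y t] h caught d1 by auto
    then show "cops_win E' (hd t # map Inl cs) (last t)" by (simp add: frees_cc)
  qed
next
  case (step cs cs' r)
  show ?case unfolding Aconc_def
  proof (intro allI impI)
    fix y t assume h: "E y r \<and> nbw E' t \<and> length t = Suc g \<and> 2 \<le> length t \<and> last (butlast t) = Inl y \<and>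
      last t = sp y r 1 \<and> set cs \<subseteq> V \<and> length cs = k"
    have nxt: "r \<in> set cs' \<or> (\<forall>z. E r z \<longrightarrow> Aconc g cs' z)"
      using step(2) by (auto simp: robber_move_def)
    have "cops_win E' (hd t # frees d cs cs' 0) (last t)"
      using block[OF IH step(1) _ _ nxt, of 0 y t] h d1 by auto
    then show "cops_win E' (hd t # map Inl cs) (last t)"
      using frees_0[OF cop_move_length[OF step(1)]] by simp
  qed
qed


lemma Wlem:
  assumes IH: "\<forall>g'<g. Pst g'" and cV: "set c \<subseteq> V" and ck: "length c = k"
  shows "i < d \<Longrightarrow> E x y \<Longrightarrow> nbw E' t \<Longrightarrow> length t = Suc g \<Longrightarrow> 2 \<le> length t \<Longrightarrow>
    last (butlast t) = sp x y i \<Longrightarrow> last t = sp x y (Suc i) \<Longrightarrow>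
    cops_win E' (hd t # map Inl c) (last t)"
proof (induction "d - i" arbitrary: i t rule: less_induct)
  case less
  show ?case
  proof (rule chase[OF less.prems(3) less.prems(5) cop_move_refl])
    fix t' assume "nbw E' t'" "t' \<noteq> []" "length t' < length t"
    then show "cops_win E' (hd t' # map Inl c) (last t')"
      using shrinkIH[OF IH, of t' c c d] less.prems cV ck cop_move_refl[of E c] by (simp add: frees_cc)
  next
    fix R' assume e: "E' (last t) R'" and nb: "R' \<noteq> last (butlast t)" and nR: "R' \<noteq> last t"
      and t3: "3 \<le> length t" and nw: "nbw E' (tl t @ [R'])"
    note sf = snoc_facts[OF less.prems(5), of R']
    show "cops_win E' (hd (tl t) # map Inl c) R'"
    proof (cases "Suc i < d")
      case True
      have "R' = sp x y (Suc i - 1) \<or> R' = sp x y (Suc (Suc i))"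
        using nbr_mid[OF less.prems(2), of "Suc i" R'] True e less.prems by simp
      then have R': "R' = sp x y (Suc (Suc i))" using nb less.prems by auto
      have "cops_win E' (hd (tl t @ [R']) # map Inl c) (last (tl t @ [R']))"
        by (rule less.hyps[of "Suc i"]) (use True less.prems nw sf R' in auto)
      then show ?thesis using sf by simp
    next
      case False
      then have jd: "Suc i = d" using less.prems by simp
      then have lt: "last t = Inl y" using less.prems d1 by simp
      obtain z where z: "E y z" "R' = sp y z 1" using nbr_Inl[of y R'] e lt by auto
      have "cops_win E c z" using Gwin[OF ck cV] EV[OF z(1)] by blast
      then have Az: "Aconc g c z" by (rule Alem[OF IH])
      have pre: "E y z \<and> nbw E' (tl t @ [R']) \<and> length (tl t @ [R']) = Suc g \<and> 2 \<le> length (tl t @ [R']) \<and>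
        last (butlast (tl t @ [R'])) = Inl y \<and> last (tl t @ [R']) = sp y z 1 \<and> set c \<subseteq> V \<and> length c = k"
        using z nw sf lt less.prems cV ck by auto
      have "cops_win E' (hd (tl t @ [R']) # map Inl c) (last (tl t @ [R']))"
        using Az pre unfolding Aconc_def by blast
      then show ?thesis using sf by simp
    qed
  qed
qed

lemma Pstep:
  assumes IH: "\<forall>g'<g. Pst g'"
  shows "Pst g"
  unfolding Pst_def
proof (intro allI impI)
  fix t c c' j
  assume h: "nbw E' t \<and> length t = Suc g \<and> cop_move E c c' \<and> set c \<subseteq> V \<and> length c = k \<and> j \<le> d"
  then have cm: "cop_move E c c'" and cV: "set c \<subseteq> V" and ck: "length c = k" by auto
  have lc: "length c = length c'" using cop_move_length[OF cm] .
  have c'V: "set c' \<subseteq> V" using cop_move_V[OF cm cV] .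
  have "nbw E' t \<Longrightarrow> length t = Suc g \<Longrightarrow> j \<le> d \<Longrightarrow> cops_win E' (hd t # frees d c c' j) (last t)"
  proof (induction "d - j" arbitrary: j t rule: less_induct)
    case less
    show ?case
    proof (cases "length t = 1")
      case True
      then have "last t = hd t" by (cases t) auto
      then show ?thesis by (simp add: cops_win.caught)
    next
      case False
      then have t2: "2 \<le> length t" using less.prems by simp
      show ?thesis
      proof (cases "j = d")
        case True
        have fd: "frees d c c' j = map Inl c'" using frees_d[OF lc] True d1 by simp
        obtain x y i where xy: "E x y" "i < d" "last (butlast t) = sp x y i" "last t = sp x y (Suc i)"
          using nbw_last[OF less.prems(1) t2] by (rule E'_cases)
        have "cops_win E' (hd t # map Inl c') (last t)"
          using Wlem[OF IH c'V] xy less.prems t2 lc ck by simp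
        then show ?thesis using fd by simp
      next
        case False
        then have jd: "j < d" using less.prems by simp
        show ?thesis
        proof (rule chase[OF less.prems(1) t2 frees_move[OF cm jd]])
          fix t' assume "nbw E' t'" "t' \<noteq> []" "length t' < length t"
          then show "cops_win E' (hd t' # frees d c c' (Suc j)) (last t')"
            using shrinkIH[OF IH, of t' c c' "Suc j"] less.prems cm cV ck jd by simp
        next
          fix R' assume t3: "3 \<le> length t" and nw: "nbw E' (tl t @ [R'])"
          note sf = snoc_facts[OF t2, of R']
          have "cops_win E' (hd (tl t @ [R']) # frees d c c' (Suc j)) (last (tl t @ [R']))"
            by (rule less.hyps[of "Suc j"]) (use jd less.prems nw sf in auto)
          then show "cops_win E' (hd (tl t) # frees d c c' (Suc j)) R'" using sf by simp
        qed
      qed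
    qed
  qed
  then show "cops_win E' (hd t # frees d c c' j) (last t)" using h by blast
qed

lemma Pall: "Pst g"
  by (induction g rule: less_induct) (use Pstep in blast)

lemma ub_main:
  assumes conn: "connected_graph V E" and v0: "v0 \<in> V" and R: "R \<in> subdiv_V V E d"
  shows "cops_win E' (Inl v0 # map Inl (replicate k v0)) R"
proof -
  have rt: "E'\<^sup>*\<^sup>* (Inl v0) R"
  proof (cases "R \<in> Inl ` V")
    case True
    then obtain a where "a \<in> V" "R = Inl a" by blast
    then show ?thesis using lift_rt conn v0 unfolding connected_graph_def by blast
  next
    case False
    then obtain a b i where abi: "E a b" "a < b" "0 < i" "i < d" "R = Inr (a, b, i)"
      using R unfolding subdiv_V_def by blast
    then have "R = sp a b i" by (simp add: sub_pt_mid)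
    moreover have "E\<^sup>*\<^sup>* v0 a" using conn v0 EV[OF abi(1)] unfolding connected_graph_def by blast
    ultimately show ?thesis using lift_rt path_lift[OF abi(1), of i] abi(4)
      by (meson less_imp_le rtranclp_trans)
  qed
  obtain t where t: "nbw E' t" "t \<noteq> []" "hd t = Inl v0" "last t = R" using nbw_reach[OF rt] by blast
  have "length t = Suc (length t - 1)" using t(2) by (cases t) auto
  then have "cops_win E' (hd t # frees d (replicate k v0) (replicate k v0) d) (last t)"
  proof -
    have P: "Pst (length t - 1)" by (rule Pall)
    have "set (replicate k v0) \<subseteq> V" using v0 by auto
    then show ?thesis using P \<open>length t = Suc (length t - 1)\<close> t(1) cop_move_refl[of E "replicate k v0"]
      unfolding Pst_def by (metis le_refl length_replicate)
  qed
  then show ?thesis using t by (simp add: frees_cc)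
qed

end

lemma relpowp_mono_refl:
  assumes refl: "\<forall>a. S a a" and "(S ^^ n) a b" and "n \<le> N"
  shows "(S ^^ N) a b"
  using assms(3,2)
proof (induction N)
  case 0 then show ?case by simp
next
  case (Suc N)
  show ?case
  proof (cases "n = Suc N")
    case True then show ?thesis using Suc by simp
  next
    case False
    then have "(S ^^ N) a b" using Suc by simp
    then show ?thesis using refl relpowp_Suc_I[of n S a b b] relpowp_Suc_I[of N S a b b] by blast
  qed
qed

lemma list_bound:
  assumes "\<forall>a. S a a"
  shows "list_all2 (\<lambda>a b. S\<^sup>*\<^sup>* a b) c cs \<Longrightarrow> \<exists>N. list_all2 (S ^^ N) c cs"
proof (induction c cs rule: list_all2_induct)
  case Nil then show ?case by auto
next
  case (Cons a c b cs)
  obtain N where N: "list_all2 (S ^^ N) c cs" using Cons by blast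
  obtain n where n: "(S ^^ n) a b" using Cons(1) rtranclp_imp_relpowp by metis
  let ?M = "max N n"
  have "list_all2 (S ^^ ?M) c cs"
    using N by (rule list_all2_mono) (use relpowp_mono_refl[of S, OF assms] in auto)
  moreover have "(S ^^ ?M) a b" using relpowp_mono_refl[of S, OF assms n] by simp
  ultimately show ?case by auto
qed

lemma list_relpow_step:
  "list_all2 (S ^^ Suc N) c cs \<Longrightarrow> \<exists>c'. list_all2 S c c' \<and> list_all2 (S ^^ N) c' cs"
proof (induction c cs rule: list_all2_induct)
  case Nil then show ?case by auto
next
  case (Cons a c b cs)
  obtain c' where "list_all2 S c c'" "list_all2 (S ^^ N) c' cs" using Cons by blast
  moreover obtain a' where "S a a'" "(S ^^ N) a' b" using relpowp_Suc_D2[OF Cons(1)] by blast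
  ultimately show ?case by (intro exI[of _ "a' # c'"]) auto
qed

lemma gwin_all:
  assumes G: "graph V E" and conn: "connected_graph V E" and kw: "k_cops_win V E k"
  shows "length c = k \<Longrightarrow> set c \<subseteq> V \<Longrightarrow> x \<in> V \<Longrightarrow> cops_win E c x"
proof -
  assume lc: "length c = k" and cV: "set c \<subseteq> V" and xV: "x \<in> V"
  obtain cs where cs: "length cs = k" "set cs \<subseteq> V" "\<forall>r\<in>V. cops_win E cs r"
    using kw unfolding k_cops_win_def by blast
  define S where "S = (\<lambda>a b. a = b \<or> E a b)"
  have Sr: "\<forall>a. S a a" by (simp add: S_def)
  have EV: "\<And>a b. E a b \<Longrightarrow> b \<in> V" using G by (auto simp: graph_def)
  have "list_all2 (\<lambda>a b. S\<^sup>*\<^sup>* a b) c cs"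
    unfolding list_all2_conv_all_nth
  proof (intro conjI allI impI)
    show "length c = length cs" using lc cs by simp
    fix i assume i: "i < length c"
    have "c ! i \<in> V" "cs ! i \<in> V" using i lc cs cV by auto
    then have "E\<^sup>*\<^sup>* (c ! i) (cs ! i)" using conn unfolding connected_graph_def by blast
    then show "S\<^sup>*\<^sup>* (c ! i) (cs ! i)" by (rule rtranclp_mono[THEN predicate2D, rotated]) (auto simp: S_def)
  qed
  then obtain N where N: "list_all2 (S ^^ N) c cs" using list_bound[of S, OF Sr] by blast
  have "\<And>c x. list_all2 (S ^^ N) c cs \<Longrightarrow> set c \<subseteq> V \<Longrightarrow> x \<in> V \<Longrightarrow> cops_win E c x"
  proof (induction N)
    case 0
    then have "c = cs" by (simp add: list_all2_eq[symmetric])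
    then show ?case using cs 0 by blast
  next
    case (Suc N)
    obtain c' where c': "list_all2 S c c'" "list_all2 (S ^^ N) c' cs"
      using list_relpow_step[OF Suc.prems(1)] by blast
    have mv: "cop_move E c c'" using c'(1) by (simp add: cop_move_def S_def)
    have c'V: "set c' \<subseteq> V" using c'(1) Suc.prems(2)
      by (induction c c' rule: list_all2_induct) (auto simp: S_def dest: EV)
    show ?case
    proof (rule cops_win.step[OF mv], intro disjI2 allI impI)
      fix r' assume "robber_move E x r'"
      then have "r' \<in> V" using Suc.prems(3) EV by (auto simp: robber_move_def)
      then show "cops_win E c' r'" using Suc.IH[OF c'(2) c'V] by blast
    qed
  qed
  then show ?thesis using N cV xV by blast
qed

lemma k_exists: "finite V \<Longrightarrow> \<exists>k. k_cops_win V E k"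
proof -
  assume "finite V"
  then obtain xs where "set xs = V" using finite_list by blast
  then have "k_cops_win V E (length xs)" unfolding k_cops_win_def
    by (intro exI[of _ xs]) (auto intro: cops_win.caught)
  then show ?thesis by blast
qed

lemma star_list_ex:
  "\<forall>P\<in>set C. \<exists>c. c \<in> V \<and> star E d c P \<Longrightarrow> \<exists>c0. list_all2 (\<lambda>c P. c \<in> V \<and> star E d c P) c0 C"
proof (induction C)
  case Nil then show ?case by auto
next
  case (Cons P C)
  then obtain c0 where "list_all2 (\<lambda>c P. c \<in> V \<and> star E d c P) c0 C" by auto
  moreover obtain c where "c \<in> V" "star E d c P" using Cons.prems by auto
  ultimately show ?case by (intro exI[of _ "c # c0"]) auto
qed

theorem lemma17:
  fixes V :: "'a::linorder set" and E :: "'a \<Rightarrow> 'a \<Rightarrow> bool" and d :: nat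
  assumes "graph V E" and "connected_graph V E" and "d \<ge> 1"
  shows "cop_number V E \<le> cop_number (subdiv_V V E d) (subdiv_E E d)
       \<and> cop_number (subdiv_V V E d) (subdiv_E E d) \<le> cop_number V E + 1"
proof -
  interpret sub V E d using assms(1,3) by unfold_locales
  let ?V' = "subdiv_V V E d"
  define k where "k = cop_number V E"
  have fin: "finite V" using assms(1) by (simp add: graph_def)
  have kw: "k_cops_win V E k" unfolding k_def cop_number_def
    using k_exists[OF fin] by (rule LeastI_ex)
  obtain v0 where v0: "v0 \<in> V" using assms(2) unfolding connected_graph_def by blast
  interpret ub V E d k
    by unfold_locales (rule gwin_all[OF assms(1,2) kw])
  have kw': "k_cops_win ?V' E' (Suc k)"
    unfolding k_cops_win_def
  proof (intro exI[of _ "Inl v0 # map Inl (replicate k v0)"] conjI ballI)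
    show "length (Inl v0 # map Inl (replicate k v0)) = Suc k" by simp
    show "set (Inl v0 # map Inl (replicate k v0)) \<subseteq> ?V'" using v0 by (auto simp: subdiv_V_def)
    fix R assume "R \<in> ?V'"
    then show "cops_win E' (Inl v0 # map Inl (replicate k v0)) R" using ub_main[OF assms(2) v0] by blast
  qed
  have up: "cop_number ?V' E' \<le> k + 1"
    unfolding cop_number_def using kw' by (simp add: Least_le)
  define k' where "k' = cop_number ?V' E'"
  have kw2: "k_cops_win ?V' E' k'" unfolding k'_def cop_number_def
    using kw' by (rule LeastI)
  obtain C0 where C0: "length C0 = k'" "set C0 \<subseteq> ?V'" "\<forall>R\<in>?V'. cops_win E' C0 R"
    using kw2 unfolding k_cops_win_def by blast
  have "\<forall>P\<in>set C0. \<exists>c. c \<in> V \<and> star E d c P"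
  proof
    fix P assume "P \<in> set C0"
    then have "P \<in> ?V'" using C0 by blast
    then consider a where "a \<in> V" "P = Inl a" | a b i where "E a b" "a < b" "0 < i" "i < d" "P = Inr (a, b, i)"
      unfolding subdiv_V_def by blast
    then show "\<exists>c. c \<in> V \<and> star E d c P"
    proof cases
      case 1 then show ?thesis by (auto simp: star_def)
    next
      case 2
      then have "P = sp a b i" by (simp add: sub_pt_mid)
      then show ?thesis using 2 EV[OF 2(1)] unfolding star_def by blast
    qed
  qed
  then obtain c0 where c0: "list_all2 (\<lambda>c P. c \<in> V \<and> star E d c P) c0 C0" using star_list_ex by blast
  have "k_cops_win V E k'"
    unfolding k_cops_win_def
  proof (intro exI[of _ c0] conjI ballI)
    show "length c0 = k'" using c0 C0 by (simp add: list_all2_lengthD)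
    show "set c0 \<subseteq> V" using c0 by (induction c0 C0 rule: list_all2_induct) auto
    fix x assume xV: "x \<in> V"
    have "Inl x \<in> ?V'" using xV by (simp add: subdiv_V_def)
    then have cw: "cops_win E' C0 (Inl x)" using C0 by blast
    have J: "list_all2 (Jr E d (d - 1)) c0 C0"
      using c0 by (rule list_all2_mono) (auto intro: star_J)
    show "cops_win E c0 x" using lb_sim[OF cw] J d1 by auto
  qed
  then have "k \<le> k'" unfolding k_def cop_number_def by (simp add: Least_le)
  then show ?thesis using up unfolding k_def k'_def by simp
qed

end
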